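(* Let $\mathfrak g$ be a finite-dimensional simple complex Lie algebra with root lattice $Q$ and weight lattice $\Lambda$. Then: (a) if $\mathfrak g$ is of type $A_{2k}$ ($k\ge1$) or $E_6$, then $Q\cap2\Lambda=2Q$ and $2Q\ne2\Lambda$; (b) if $\mathfrak g$ is of type $A_1$, $B_n$, $C_n$, $D_{2k+2}$ or $E_7$, then $Q\cap2\Lambda=2\Lambda$ and $2\Lambda\ne2Q$; (c) if $\mathfrak g$ is of type $E_8$, $F_4$ or $G_2$, then $Q\cap2\Lambda=2\Lambda=2Q$; (d) if $\mathfrak g$ is of type $A_{2k+1}$ or $D_{2k+3}$ with $k\ge1$, then $Q\cap2\Lambda=2Q+\mathbb Z\alpha^\diamond$ and $2Q+\mathbb Z\alpha^\diamond\ne2\Lambda$. Moreover, if $\mathfrak g$ is of type $D_n$ with $n$ odd, then $2Q+\mathbb Z\alpha^\diamond=4\mathbb Z\lambda_{n-1}+4\mathbb Z\lambda_n+\mathbb Z\alpha^\diamond+\sum_{i=1}^{n-2}2\mathbb Z\lambda_i$.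
   Context: Simple roots $\alpha_1,\dots,\alpha_n$ and fundamental weights $\lambda_1,\dots,\lambda_n$ are labelled by the Dynkin diagrams: $A_n$: chain $1-2-\cdots-n$; $D_n$: chain $1-2-\cdots-(n-2)$ with nodes $n-1$ and $n$ both attached to node $n-2$. $Q=\bigoplus_i\mathbb Z\alpha_i$, $\Lambda=\bigoplus_i\mathbb Z\lambda_i$. Define $\alpha^\diamond=\sum_{i\text{ odd}}\alpha_i$ if $\mathfrak g$ is of type $A_n$, and $\alpha^\diamond=\alpha_{n-1}+\alpha_n$ if $\mathfrak g$ is of type $D_n$. *)

theory Defs
  imports Main
begin

text \<open>Vectors of the weight lattice are written in the basis of fundamental
  weights lambda_1..lambda_r, as functions nat => int supported on {1..r}.
  The simple root alpha_i has coordinates the i-th row of the Cartan matrix: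
  alpha_i = sum_j <alpha_i, alpha_j^vee> lambda_j.  Bourbaki labelling.\<close>

datatype ctype = A nat | B nat | C nat | D nat | E6 | E7 | E8 | F4 | G2

fun valid_type :: "ctype \<Rightarrow> bool" where
  "valid_type (A n) = (n \<ge> 1)"
| "valid_type (B n) = (n \<ge> 2)"
| "valid_type (C n) = (n \<ge> 3)"
| "valid_type (D n) = (n \<ge> 4)"
| "valid_type _ = True"

fun rank :: "ctype \<Rightarrow> nat" where
  "rank (A n) = n" | "rank (B n) = n" | "rank (C n) = n" | "rank (D n) = n"
| "rank E6 = 6" | "rank E7 = 7" | "rank E8 = 8" | "rank F4 = 4" | "rank G2 = 2"

definition chain_edges :: "nat \<Rightarrow> (nat \<times> nat) set" where
  "chain_edges n = {(i, i + 1) | i. 1 \<le> i \<and> i < n}"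

definition E_edges :: "(nat \<times> nat) set" where
  "E_edges = {(1,3),(3,4),(4,5),(5,6),(2,4)}"

fun edges :: "ctype \<Rightarrow> (nat \<times> nat) set" where
  "edges (A n) = chain_edges n"
| "edges (B n) = chain_edges n"
| "edges (C n) = chain_edges n"
| "edges (D n) = chain_edges (n - 1) \<union> {(n - 2, n)}"
| "edges E6 = E_edges"
| "edges E7 = E_edges \<union> {(6,7)}"
| "edges E8 = E_edges \<union> {(6,7),(7,8)}"
| "edges F4 = chain_edges 4"
| "edges G2 = chain_edges 2"

definition adjacent :: "ctype \<Rightarrow> nat \<Rightarrow> nat \<Rightarrow> bool" where
  "adjacent t i j = ((i, j) \<in> edges t \<or> (j, i) \<in> edges t)"

text \<open>Cartan matrix entry a_ij = <alpha_i, alpha_j^vee> = 2(alpha_i,alpha_j)/(alpha_j,alpha_j).\<close>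
definition cartan :: "ctype \<Rightarrow> nat \<Rightarrow> nat \<Rightarrow> int" where
  "cartan t i j =
     (if i = j then 2
      else if adjacent t i j then
        (case t of
           B n \<Rightarrow> (if (i, j) = (n - 1, n) then -2 else -1)
         | C n \<Rightarrow> (if (i, j) = (n, n - 1) then -2 else -1)
         | F4 \<Rightarrow> (if (i, j) = (2, 3) then -2 else -1)
         | G2 \<Rightarrow> (if (i, j) = (2, 1) then -3 else -1)
         | _ \<Rightarrow> -1)
      else 0)"

definition idx :: "ctype \<Rightarrow> nat set" where
  "idx t = {1..rank t}"

definition weight_lattice :: "ctype \<Rightarrow> (nat \<Rightarrow> int) set" where
  "weight_lattice t = {v. \<forall>j. j \<notin> idx t \<longrightarrow> v j = 0}"

definition fund_weight :: "ctype \<Rightarrow> nat \<Rightarrow> nat \<Rightarrow> int" where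
  "fund_weight t i = (\<lambda>j. if j = i \<and> j \<in> idx t then 1 else 0)"

definition simple_root :: "ctype \<Rightarrow> nat \<Rightarrow> nat \<Rightarrow> int" where
  "simple_root t i = (\<lambda>j. if j \<in> idx t then cartan t i j else 0)"

definition root_lattice :: "ctype \<Rightarrow> (nat \<Rightarrow> int) set" where
  "root_lattice t =
     {v. \<exists>c :: nat \<Rightarrow> int. v = (\<lambda>j. \<Sum>i\<in>idx t. c i * simple_root t i j)}"

definition scale :: "int \<Rightarrow> (nat \<Rightarrow> int) set \<Rightarrow> (nat \<Rightarrow> int) set" where
  "scale k S = (\<lambda>v j. k * v j) ` S"

definition alpha_diamond :: "ctype \<Rightarrow> nat \<Rightarrow> int" where
  "alpha_diamond t =
     (case t of
        A n \<Rightarrow> (\<lambda>j. \<Sum>i\<in>{i\<in>idx t. odd i}. simple_root t i j)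
      | D n \<Rightarrow> (\<lambda>j. simple_root t (n - 1) j + simple_root t n j)
      | _ \<Rightarrow> (\<lambda>j. 0))"

definition twoQ_plus_diamond :: "ctype \<Rightarrow> (nat \<Rightarrow> int) set" where
  "twoQ_plus_diamond t =
     {v. \<exists>u\<in>scale 2 (root_lattice t). \<exists>m :: int. v = (\<lambda>j. u j + m * alpha_diamond t j)}"

end

theory Submission
  imports Defs
begin


definition rl :: "ctype \<Rightarrow> (nat \<Rightarrow> int) \<Rightarrow> nat \<Rightarrow> int" where
  "rl t c = (\<lambda>j. \<Sum>i\<in>idx t. c i * simple_root t i j)"

definition colsum :: "ctype \<Rightarrow> (nat \<Rightarrow> int) \<Rightarrow> nat \<Rightarrow> int" where
  "colsum t c j = (\<Sum>i\<in>idx t. c i * cartan t i j)"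

lemma root_lattice_rl: "root_lattice t = range (rl t)"
  unfolding root_lattice_def rl_def by auto

lemma finite_idx[simp]: "finite (idx t)" by (simp add: idx_def)

lemma rl_apply: "rl t c j = (if j \<in> idx t then colsum t c j else 0)"
  unfolding rl_def colsum_def simple_root_def by auto

lemma rl_cong: "(\<And>i. i \<in> idx t \<Longrightarrow> c i = d i) \<Longrightarrow> rl t c = rl t d"
  unfolding rl_def by (auto intro!: sum.cong ext)

lemma rl_add: "rl t (\<lambda>i. c i + d i) = (\<lambda>j. rl t c j + rl t d j)"
  unfolding rl_def by (auto simp: algebra_simps sum.distrib)

lemma rl_smult: "rl t (\<lambda>i. k * c i) = (\<lambda>j. k * rl t c j)"
  unfolding rl_def by (auto simp: sum_distrib_left mult.assoc)

lemma rl_sum: "finite S \<Longrightarrow> rl t (\<lambda>i. \<Sum>x\<in>S. f x i) = (\<lambda>j. \<Sum>x\<in>S. rl t (f x) j)"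
  unfolding rl_def by (auto simp: sum_distrib_right sum.swap[of _ S])

lemma Q_sub_L: "root_lattice t \<subseteq> weight_lattice t"
  by (auto simp: root_lattice_rl weight_lattice_def rl_apply)

lemma scale2_inj: "inj (\<lambda>(v::nat\<Rightarrow>int) j. 2 * v j)"
  by (auto simp: inj_def fun_eq_iff)

lemma scale2_eq: "scale 2 X = scale 2 Y \<Longrightarrow> X = Y"
  unfolding scale_def using scale2_inj by (metis inj_image_eq_iff)

lemma scale2_mem: "(\<lambda>j. 2 * v j) \<in> scale 2 X \<longleftrightarrow> v \<in> X"
  unfolding scale_def using scale2_inj by (metis inj_image_mem_iff)

lemma twoQ_sub: "scale 2 (root_lattice t) \<subseteq> root_lattice t \<inter> scale 2 (weight_lattice t)"
proof
  fix v assume "v \<in> scale 2 (root_lattice t)"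
  then obtain c where v: "v = (\<lambda>j. 2 * rl t c j)" by (auto simp: scale_def root_lattice_rl)
  have "v = rl t (\<lambda>i. 2 * c i)" by (simp add: v rl_smult)
  moreover have "v \<in> scale 2 (weight_lattice t)" unfolding v scale2_mem using Q_sub_L
    by (auto simp: root_lattice_rl)
  ultimately show "v \<in> root_lattice t \<inter> scale 2 (weight_lattice t)" by (auto simp: root_lattice_rl)
qed

lemma functional:
  assumes "\<forall>i\<in>idx t. m dvd (\<Sum>j\<in>idx t. g j * cartan t i j)"
  shows "m dvd (\<Sum>j\<in>idx t. g j * rl t c j)"
proof -
  have "(\<Sum>j\<in>idx t. g j * rl t c j) = (\<Sum>j\<in>idx t. \<Sum>i\<in>idx t. g j * (c i * cartan t i j))"
    by (simp add: rl_apply colsum_def sum_distrib_left)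
  also have "\<dots> = (\<Sum>i\<in>idx t. c i * (\<Sum>j\<in>idx t. g j * cartan t i j))"
    by (subst sum.swap) (simp add: sum_distrib_left algebra_simps)
  finally show ?thesis using assms by (auto intro!: dvd_sum)
qed

lemma sum_fw: "k \<in> idx t \<Longrightarrow> (\<Sum>j\<in>idx t. g j * (s * fund_weight t k j)) = s * g k"
  unfolding fund_weight_def by (simp add: if_distrib cong: if_cong)

lemma not_in_Q:
  assumes "\<forall>i\<in>idx t. m dvd (\<Sum>j\<in>idx t. g j * cartan t i j)" "k \<in> idx t" "\<not> m dvd s * g k"
  shows "(\<lambda>j. s * fund_weight t k j) \<notin> root_lattice t"
proof
  assume "(\<lambda>j. s * fund_weight t k j) \<in> root_lattice t"
  then obtain c where c: "(\<lambda>j. s * fund_weight t k j) = rl t c" by (auto simp: root_lattice_rl)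
  have "m dvd (\<Sum>j\<in>idx t. g j * rl t c j)" by (rule functional[OF assms(1)])
  also have "(\<Sum>j\<in>idx t. g j * rl t c j) = s * g k" using sum_fw[OF assms(2)] c by metis
  finally show False using assms(3) by simp
qed

lemma mem_scale2_L: "v \<in> scale 2 (weight_lattice t) \<longleftrightarrow> (\<forall>j. even (v j)) \<and> v \<in> weight_lattice t"
proof
  assume "v \<in> scale 2 (weight_lattice t)"
  then show "(\<forall>j. even (v j)) \<and> v \<in> weight_lattice t" by (auto simp: scale_def weight_lattice_def)
next
  assume a: "(\<forall>j. even (v j)) \<and> v \<in> weight_lattice t"
  have "v = (\<lambda>j. 2 * (v j div 2))" using a by (auto simp: fun_eq_iff)
  moreover have "(\<lambda>j. v j div 2) \<in> weight_lattice t" using a by (auto simp: weight_lattice_def)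
  ultimately show "v \<in> scale 2 (weight_lattice t)" unfolding scale_def by (metis image_eqI)
qed

lemma rl_mem[simp]: "rl t c \<in> root_lattice t" by (simp add: root_lattice_rl)

lemma span_fw:
  assumes "\<forall>k\<in>idx t. (\<lambda>j. s * fund_weight t k j) \<in> root_lattice t" "w \<in> weight_lattice t"
  shows "(\<lambda>j. s * w j) \<in> root_lattice t"
proof -
  from assms(1) have "\<forall>k\<in>idx t. \<exists>c. (\<lambda>j. s * fund_weight t k j) = rl t c" by (auto simp: root_lattice_rl)
  then obtain C where C: "\<And>k. k \<in> idx t \<Longrightarrow> (\<lambda>j. s * fund_weight t k j) = rl t (C k)" by metis
  have "rl t (\<lambda>i. \<Sum>k\<in>idx t. w k * C k i) = (\<lambda>x. \<Sum>k\<in>idx t. w k * rl t (C k) x)"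
    by (simp add: rl_sum rl_smult)
  also have "\<dots> = (\<lambda>x. \<Sum>k\<in>idx t. w k * (s * fund_weight t k x))"
    using C by (intro ext sum.cong refl) (metis mult.commute)
  also have "\<dots> = (\<lambda>x. s * w x)"
  proof
    fix x show "(\<Sum>k\<in>idx t. w k * (s * fund_weight t k x)) = s * w x"
      using assms(2) unfolding fund_weight_def weight_lattice_def
      by (cases "x \<in> idx t") (auto simp: if_distrib cong: if_cong)
  qed
  finally show ?thesis by (metis rl_mem)
qed

lemma pattern_a:
  assumes ker: "\<forall>c. (\<forall>j\<in>idx t. even (colsum t c j)) \<longrightarrow> (\<forall>i\<in>idx t. even (c i))"
    and k: "k \<in> idx t" and nq: "fund_weight t k \<notin> root_lattice t"
  shows "root_lattice t \<inter> scale 2 (weight_lattice t) = scale 2 (root_lattice t) \<and>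
       scale 2 (root_lattice t) \<noteq> scale 2 (weight_lattice t)"
proof
  show "root_lattice t \<inter> scale 2 (weight_lattice t) = scale 2 (root_lattice t)"
  proof
    show "root_lattice t \<inter> scale 2 (weight_lattice t) \<subseteq> scale 2 (root_lattice t)"
    proof
      fix v assume v: "v \<in> root_lattice t \<inter> scale 2 (weight_lattice t)"
      then obtain c where c: "v = rl t c" by (auto simp: root_lattice_rl)
      have "\<forall>j\<in>idx t. even (colsum t c j)"
      proof
        fix j assume j: "j \<in> idx t"
        have "even (v j)" using v by (simp add: mem_scale2_L)
        then show "even (colsum t c j)" by (simp add: c rl_apply j)
      qed
      with ker have ev: "\<forall>i\<in>idx t. even (c i)" by blast
      have "rl t c = rl t (\<lambda>i. 2 * (c i div 2))" using ev by (intro rl_cong) auto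
      also have "\<dots> = (\<lambda>j. 2 * rl t (\<lambda>i. c i div 2) j)" by (rule rl_smult)
      finally show "v \<in> scale 2 (root_lattice t)" using c scale2_mem by (metis rl_mem)
    qed
  qed (rule twoQ_sub[THEN subset_trans], simp)
next
  show "scale 2 (root_lattice t) \<noteq> scale 2 (weight_lattice t)"
  proof
    assume "scale 2 (root_lattice t) = scale 2 (weight_lattice t)"
    then have "root_lattice t = weight_lattice t" by (rule scale2_eq)
    moreover have "fund_weight t k \<in> weight_lattice t" by (auto simp: fund_weight_def weight_lattice_def)
    ultimately show False using nq by simp
  qed
qed

lemma pattern_b:
  assumes two: "\<forall>k\<in>idx t. (\<lambda>j. 2 * fund_weight t k j) \<in> root_lattice t"
    and k: "k \<in> idx t" and nq: "fund_weight t k \<notin> root_lattice t"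
  shows "root_lattice t \<inter> scale 2 (weight_lattice t) = scale 2 (weight_lattice t) \<and>
       scale 2 (weight_lattice t) \<noteq> scale 2 (root_lattice t)"
proof
  have "scale 2 (weight_lattice t) \<subseteq> root_lattice t"
    using span_fw[OF two] by (auto simp: scale_def)
  then show "root_lattice t \<inter> scale 2 (weight_lattice t) = scale 2 (weight_lattice t)" by blast
next
  show "scale 2 (weight_lattice t) \<noteq> scale 2 (root_lattice t)"
  proof
    assume "scale 2 (weight_lattice t) = scale 2 (root_lattice t)"
    then have "root_lattice t = weight_lattice t" by (metis scale2_eq)
    moreover have "fund_weight t k \<in> weight_lattice t" by (auto simp: fund_weight_def weight_lattice_def)
    ultimately show False using nq by simp
  qed
qed

lemma pattern_c:
  assumes one: "\<forall>k\<in>idx t. (\<lambda>j. 1 * fund_weight t k j) \<in> root_lattice t"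
  shows "root_lattice t \<inter> scale 2 (weight_lattice t) = scale 2 (weight_lattice t) \<and>
       scale 2 (weight_lattice t) = scale 2 (root_lattice t)"
proof -
  have "weight_lattice t \<subseteq> root_lattice t" using span_fw[OF one] by auto
  then have eq: "root_lattice t = weight_lattice t" using Q_sub_L by blast
  have "scale 2 (weight_lattice t) \<subseteq> root_lattice t"
    using twoQ_sub[of t] eq by auto
  then show ?thesis using eq by auto
qed

lemma pattern_d:
  assumes ker: "\<forall>c. (\<forall>j\<in>idx t. even (colsum t c j)) \<longrightarrow> (\<exists>m c'. \<forall>i\<in>idx t. c i = 2 * c' i + m * d i)"
    and ad: "alpha_diamond t = rl t d" and ev: "\<forall>j\<in>idx t. even (colsum t d j)"
    and nq: "(\<lambda>j. 2 * fund_weight t k j) \<notin> root_lattice t"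
  shows "root_lattice t \<inter> scale 2 (weight_lattice t) = twoQ_plus_diamond t \<and>
       twoQ_plus_diamond t \<noteq> scale 2 (weight_lattice t)"
proof -
  have eq: "root_lattice t \<inter> scale 2 (weight_lattice t) = twoQ_plus_diamond t"
  proof
    show "root_lattice t \<inter> scale 2 (weight_lattice t) \<subseteq> twoQ_plus_diamond t"
    proof
      fix v assume v: "v \<in> root_lattice t \<inter> scale 2 (weight_lattice t)"
      then obtain c where c: "v = rl t c" by (auto simp: root_lattice_rl)
      have "\<forall>j\<in>idx t. even (colsum t c j)"
      proof
        fix j assume j: "j \<in> idx t"
        have "even (v j)" using v by (simp add: mem_scale2_L)
        then show "even (colsum t c j)" by (simp add: c rl_apply j)
      qed
      with ker obtain m c' where mc: "\<forall>i\<in>idx t. c i = 2 * c' i + m * d i" by blast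
      have "rl t c = rl t (\<lambda>i. 2 * c' i + m * d i)" using mc by (intro rl_cong) auto
      also have "\<dots> = (\<lambda>j. 2 * rl t c' j + m * rl t d j)" by (simp add: rl_add rl_smult)
      finally have "v = (\<lambda>j. 2 * rl t c' j + m * alpha_diamond t j)" using c ad by simp
      moreover have "(\<lambda>j. 2 * rl t c' j) \<in> scale 2 (root_lattice t)" by (simp add: scale2_mem)
      ultimately show "v \<in> twoQ_plus_diamond t" unfolding twoQ_plus_diamond_def
        by (intro CollectI bexI[of _ "\<lambda>j. 2 * rl t c' j"] exI[of _ m]) auto
    qed
  next
    show "twoQ_plus_diamond t \<subseteq> root_lattice t \<inter> scale 2 (weight_lattice t)"
    proof
      fix v assume "v \<in> twoQ_plus_diamond t"
      then obtain u m where u: "u \<in> scale 2 (root_lattice t)" and v: "v = (\<lambda>j. u j + m * alpha_diamond t j)"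
        unfolding twoQ_plus_diamond_def by blast
      from u obtain c' where u': "u = (\<lambda>j. 2 * rl t c' j)" by (auto simp: scale_def root_lattice_rl)
      have vr: "v = rl t (\<lambda>i. 2 * c' i + m * d i)" by (simp add: v u' ad rl_add rl_smult)
      moreover have "\<forall>j. even (v j)"
      proof
        fix j have "even (rl t d j)" using ev by (simp add: rl_apply)
        then show "even (v j)" by (simp add: v u' ad)
      qed
      moreover have "v \<in> weight_lattice t" using vr Q_sub_L by (metis rl_mem subsetD)
      ultimately show "v \<in> root_lattice t \<inter> scale 2 (weight_lattice t)" by (simp add: mem_scale2_L)
    qed
  qed
  moreover have "twoQ_plus_diamond t \<noteq> scale 2 (weight_lattice t)"
  proof
    assume a: "twoQ_plus_diamond t = scale 2 (weight_lattice t)"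
    have "fund_weight t k \<in> weight_lattice t" by (auto simp: fund_weight_def weight_lattice_def)
    then have "(\<lambda>j. 2 * fund_weight t k j) \<in> scale 2 (weight_lattice t)" by (simp add: scale2_mem)
    then show False using a eq nq by blast
  qed
  ultimately show ?thesis by blast
qed



lemma chain_parity:
  fixes c :: "nat \<Rightarrow> int"
  assumes h: "\<forall>j. 1 \<le> j \<and> j \<le> N \<longrightarrow> even (2 * c j - (if 2 \<le> j then c (j-1) else 0) - c (j+1))"
  shows "1 \<le> i \<Longrightarrow> i \<le> N+1 \<Longrightarrow> even (c i - (if odd i then c 1 else 0))"
proof (induction i rule: less_induct)
  case (less i)
  consider "i = 1" | "i = 2" | "i \<ge> 3" using less.prems by linarith
  then show ?case
  proof cases
    case 1 then show ?thesis by simp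
  next
    case 2
    then have "even (c (Suc (Suc 0)))" using h[rule_format, of 1] less.prems by simp
    then show ?thesis using 2 by (simp add: numeral_2_eq_2)
  next
    case 3
    define m where "m = i - 2"
    have m: "i = m + 2" "m \<ge> 1" using 3 by (auto simp: m_def)
    have e: "even (2 * c (m+1) - c m - c (m+2))"
      using h[rule_format, of "m+1"] less.prems m by (simp add: numeral_2_eq_2)
    have ih: "even (c m - (if odd m then c 1 else 0))" using less.IH[of m] less.prems m by simp
    have "odd m = odd i" using m by simp
    then show ?thesis using e ih m by presburger
  qed
qed

lemma cartan_A: "i \<in> {1..n} \<Longrightarrow> j \<in> {1..n} \<Longrightarrow>
  cartan (A n) i j = (if i = j then 2 else if i = j+1 \<or> j = i+1 then -1 else 0)"
  by (auto simp: cartan_def adjacent_def chain_edges_def)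

lemma colsum_A: assumes "j \<in> {1..n}"
  shows "colsum (A n) c j = 2 * c j - (if 2 \<le> j then c (j-1) else 0) - (if j+1 \<le> n then c (j+1) else 0)"
proof -
  have "colsum (A n) c j = (\<Sum>i\<in>{1..n}. (if i = j then 2 * c j else 0) + (if i = j+1 then - c (j+1) else 0)
      + (if i = j - 1 then (if 2 \<le> j then - c (j-1) else 0) else 0))"
    unfolding colsum_def idx_def rank.simps
    by (rule sum.cong[OF refl]) (use assms in \<open>auto simp: cartan_A\<close>)
  also have "\<dots> = 2 * c j - (if 2 \<le> j then c (j-1) else 0) - (if j+1 \<le> n then c (j+1) else 0)"
    using assms by (auto simp: sum.distrib)
  finally show ?thesis .
qed

lemma cartan_A_sym: "i \<in> {1..n} \<Longrightarrow> j \<in> {1..n} \<Longrightarrow> cartan (A n) i j = cartan (A n) j i"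
  by (auto simp: cartan_A)

lemma A_functional:
  assumes "i \<in> idx (A n)"
  shows "int (n+1) dvd (\<Sum>j\<in>idx (A n). int j * cartan (A n) i j)"
proof -
  have i: "i \<in> {1..n}" using assms by (simp add: idx_def)
  have "(\<Sum>j\<in>idx (A n). int j * cartan (A n) i j) = colsum (A n) int i"
    unfolding colsum_def using i by (intro sum.cong refl) (auto simp: idx_def cartan_A_sym)
  also have "\<dots> = (if i = n then int n + 1 else 0)"
    using i by (auto simp: colsum_A)
  finally show ?thesis by (simp add: add.commute)
qed

lemma A_notin:
  assumes "n \<ge> 1" "\<not> int (n+1) dvd s"
  shows "(\<lambda>j. s * fund_weight (A n) 1 j) \<notin> root_lattice (A n)"
  by (rule not_in_Q[where g = int and m = "int (n+1)"]) (use assms A_functional in \<open>auto simp: idx_def\<close>)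

lemma typeA_even:
  assumes "k \<ge> 1" "t = A (2 * k)"
  shows "root_lattice t \<inter> scale 2 (weight_lattice t) = scale 2 (root_lattice t) \<and>
       scale 2 (root_lattice t) \<noteq> scale 2 (weight_lattice t)"
proof -
  define n where "n = 2 * k"
  have n: "n \<ge> 2" "even n" "t = A n" using assms by (auto simp: n_def)
  show ?thesis unfolding \<open>t = A n\<close>
  proof (rule pattern_a[where k = 1])
    show "\<forall>c. (\<forall>j\<in>idx (A n). even (colsum (A n) c j)) \<longrightarrow> (\<forall>i\<in>idx (A n). even (c i))"
    proof (intro allI impI ballI)
      fix c i assume h: "\<forall>j\<in>idx (A n). even (colsum (A n) c j)" and i: "i \<in> idx (A n)"
      have h': "\<forall>j. 1 \<le> j \<and> j \<le> n - 1 \<longrightarrow> even (2 * c j - (if 2 \<le> j then c (j-1) else 0) - c (j+1))"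
      proof (intro allI impI)
        fix j assume j: "1 \<le> j \<and> j \<le> n - 1"
        then have "even (colsum (A n) c j)" using h n by (auto simp: idx_def)
        moreover have jj: "j \<in> {1..n}" and "j + 1 \<le> n" using j n by auto
        ultimately show "even (2 * c j - (if 2 \<le> j then c (j-1) else 0) - c (j+1))"
          using j n \<open>j + 1 \<le> n\<close> by (simp add: colsum_A[OF jj])
      qed
      have par: "\<And>i. 1 \<le> i \<Longrightarrow> i \<le> n \<Longrightarrow> even (c i - (if odd i then c 1 else 0))"
        using chain_parity[OF h'] n by simp
      have "even (colsum (A n) c n)" using h n by (auto simp: idx_def)
      then have "even (c (n-1))" using n by (simp add: colsum_A)
      moreover have "even (c (n-1) - c 1)" using par[of "n-1"] n by simp
      ultimately have "even (c 1)" by presburger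
      moreover have "even (c i - (if odd i then c 1 else 0))" using par i by (auto simp: idx_def)
      ultimately show "even (c i)" by presburger
    qed
  next
    show "1 \<in> idx (A n)" using n by (simp add: idx_def)
  next
    show "fund_weight (A n) 1 \<notin> root_lattice (A n)"
      using A_notin[of n 1] n by simp
  qed
qed

lemma typeA1:
  "root_lattice (A 1) \<inter> scale 2 (weight_lattice (A 1)) = scale 2 (weight_lattice (A 1)) \<and>
   scale 2 (weight_lattice (A 1)) \<noteq> scale 2 (root_lattice (A 1))"
proof (rule pattern_b[where k = 1])
  have "rl (A 1) (\<lambda>_. 1) = (\<lambda>j. 2 * fund_weight (A 1) 1 j)"
    by (auto simp: rl_apply colsum_def idx_def fund_weight_def cartan_def)
  then show "\<forall>k\<in>idx (A 1). (\<lambda>j. 2 * fund_weight (A 1) k j) \<in> root_lattice (A 1)"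
    by (auto simp: idx_def) (metis rl_mem)
  show "1 \<in> idx (A 1)" by (simp add: idx_def)
  show "fund_weight (A 1) 1 \<notin> root_lattice (A 1)" using A_notin[of 1 1] by simp
qed

lemma typeA_odd:
  assumes "k \<ge> 1" "t = A (2 * k + 1)"
  shows "root_lattice t \<inter> scale 2 (weight_lattice t) = twoQ_plus_diamond t \<and>
       twoQ_plus_diamond t \<noteq> scale 2 (weight_lattice t)"
proof -
  define n where "n = 2 * k + 1"
  have n: "n \<ge> 3" "odd n" "t = A n" using assms by (auto simp: n_def)
  define d :: "nat \<Rightarrow> int" where "d = (\<lambda>i. if odd i then 1 else 0)"
  show ?thesis unfolding \<open>t = A n\<close>
  proof (rule pattern_d[where k = 1 and d = d])
    show "\<forall>c. (\<forall>j\<in>idx (A n). even (colsum (A n) c j)) \<longrightarrow> (\<exists>m c'. \<forall>i\<in>idx (A n). c i = 2 * c' i + m * d i)"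
    proof (intro allI impI)
      fix c assume h: "\<forall>j\<in>idx (A n). even (colsum (A n) c j)"
      have h': "\<forall>j. 1 \<le> j \<and> j \<le> n - 1 \<longrightarrow> even (2 * c j - (if 2 \<le> j then c (j-1) else 0) - c (j+1))"
      proof (intro allI impI)
        fix j assume j: "1 \<le> j \<and> j \<le> n - 1"
        then have "even (colsum (A n) c j)" using h n by (auto simp: idx_def)
        moreover have jj: "j \<in> {1..n}" and "j + 1 \<le> n" using j n by auto
        ultimately show "even (2 * c j - (if 2 \<le> j then c (j-1) else 0) - c (j+1))"
          using j n \<open>j + 1 \<le> n\<close> by (simp add: colsum_A[OF jj])
      qed
      have par: "\<And>i. 1 \<le> i \<Longrightarrow> i \<le> n \<Longrightarrow> even (c i - (if odd i then c 1 else 0))"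
        using chain_parity[OF h'] n by simp
      show "\<exists>m c'. \<forall>i\<in>idx (A n). c i = 2 * c' i + m * d i"
      proof (intro exI ballI)
        fix i assume i: "i \<in> idx (A n)"
        have "even (c i - c 1 * d i)" using par[of i] i by (auto simp: idx_def d_def)
        then show "c i = 2 * ((c i - c 1 * d i) div 2) + c 1 * d i" by simp
      qed
    qed
  next
    show "alpha_diamond (A n) = rl (A n) d"
      unfolding alpha_diamond_def rl_def d_def
      by (auto simp: sum.inter_filter intro!: sum.cong)
  next
    show "\<forall>j\<in>idx (A n). even (colsum (A n) d j)"
    proof
      fix j assume "j \<in> idx (A n)"
      then have j: "j \<in> {1..n}" by (simp add: idx_def)
      show "even (colsum (A n) d j)"
      proof (cases "odd j")
        case True then show ?thesis using j by (simp add: colsum_A d_def)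
      next
        case False
        then have "2 \<le> j" "j + 1 \<le> n" using j n by (auto, presburger)
        then show ?thesis using j False by (simp add: colsum_A d_def)
      qed
    qed
  next
    show "(\<lambda>j. 2 * fund_weight (A n) 1 j) \<notin> root_lattice (A n)"
    proof -
      have "\<not> int (n+1) dvd 2" using n zdvd_imp_le[of "int (n+1)" 2] by auto
      then show ?thesis using A_notin[of n 2] n by simp
    qed
  qed
qed



lemma cartan_B: "n \<ge> 2 \<Longrightarrow> i \<in> {1..n} \<Longrightarrow> j \<in> {1..n} \<Longrightarrow>
  cartan (B n) i j = (if i = j then 2 else if i + 1 = j then (if j = n then -2 else -1)
                      else if j + 1 = i then -1 else 0)"
  by (auto simp: cartan_def adjacent_def chain_edges_def)

lemma cartan_C: "n \<ge> 3 \<Longrightarrow> i \<in> {1..n} \<Longrightarrow> j \<in> {1..n} \<Longrightarrow>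
  cartan (C n) i j = (if i = j then 2 else if i + 1 = j then -1
                      else if j + 1 = i then (if i = n then -2 else -1) else 0)"
  by (auto simp: cartan_def adjacent_def chain_edges_def)

lemma colsum_B: assumes "n \<ge> 2" "j \<in> {1..n}"
  shows "colsum (B n) c j = 2 * c j - (if 2 \<le> j then (if j = n then 2 else 1) * c (j-1) else 0)
            - (if j+1 \<le> n then c (j+1) else 0)"
proof -
  have "colsum (B n) c j = (\<Sum>i\<in>{1..n}. (if i = j then 2 * c j else 0) + (if i = j+1 then - c (j+1) else 0)
      + (if i = j - 1 then (if 2 \<le> j then - (if j = n then 2 else 1) * c (j-1) else 0) else 0))"
    unfolding colsum_def idx_def rank.simps
    by (rule sum.cong[OF refl]) (use assms in \<open>auto simp: cartan_B\<close>)
  also have "\<dots> = 2 * c j - (if 2 \<le> j then (if j = n then 2 else 1) * c (j-1) else 0)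
            - (if j+1 \<le> n then c (j+1) else 0)"
    using assms by (auto simp: sum.distrib)
  finally show ?thesis .
qed

lemma colsum_C: assumes "n \<ge> 3" "j \<in> {1..n}"
  shows "colsum (C n) c j = 2 * c j - (if 2 \<le> j then c (j-1) else 0)
            - (if j+1 \<le> n then (if j + 1 = n then 2 else 1) * c (j+1) else 0)"
proof -
  have "colsum (C n) c j = (\<Sum>i\<in>{1..n}. (if i = j then 2 * c j else 0)
      + (if i = j+1 then - (if j + 1 = n then 2 else 1) * c (j+1) else 0)
      + (if i = j - 1 then (if 2 \<le> j then - c (j-1) else 0) else 0))"
    unfolding colsum_def idx_def rank.simps
    by (rule sum.cong[OF refl]) (use assms in \<open>auto simp: cartan_C\<close>)
  also have "\<dots> = 2 * c j - (if 2 \<le> j then c (j-1) else 0)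
            - (if j+1 \<le> n then (if j + 1 = n then 2 else 1) * c (j+1) else 0)"
    using assms by (auto simp: sum.distrib)
  finally show ?thesis .
qed

lemma rowsum_C: assumes "n \<ge> 3" "i \<in> {1..n}"
  shows "(\<Sum>j\<in>idx (C n). g j * cartan (C n) i j) = 2 * g i - (if i+1 \<le> n then g (i+1) else 0)
            - (if 2 \<le> i then (if i = n then 2 else 1) * g (i-1) else 0)"
proof -
  have "(\<Sum>j\<in>idx (C n). g j * cartan (C n) i j) = (\<Sum>j\<in>{1..n}. (if j = i then 2 * g i else 0)
      + (if j = i+1 then - g (i+1) else 0)
      + (if j = i - 1 then (if 2 \<le> i then - (if i = n then 2 else 1) * g (i-1) else 0) else 0))"
    unfolding idx_def rank.simps
    by (rule sum.cong[OF refl]) (use assms in \<open>auto simp: cartan_C\<close>)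
  also have "\<dots> = 2 * g i - (if i+1 \<le> n then g (i+1) else 0)
            - (if 2 \<le> i then (if i = n then 2 else 1) * g (i-1) else 0)"
    using assms by (auto simp: sum.distrib)
  finally show ?thesis .
qed

lemma in_Q_from_colsum:
  assumes "k \<in> idx t" "\<And>j. j \<in> idx t \<Longrightarrow> colsum t c j = (if j = k then s else 0)"
  shows "(\<lambda>j. s * fund_weight t k j) \<in> root_lattice t"
proof -
  have "rl t c = (\<lambda>j. s * fund_weight t k j)"
    using assms by (auto simp: rl_apply fund_weight_def)
  then show ?thesis by (metis rl_mem)
qed

lemma typeB:
  assumes "n \<ge> 2"
  shows "root_lattice (B n) \<inter> scale 2 (weight_lattice (B n)) = scale 2 (weight_lattice (B n)) \<and>
       scale 2 (weight_lattice (B n)) \<noteq> scale 2 (root_lattice (B n))"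
proof (rule pattern_b[where k = n])
  show "\<forall>k\<in>idx (B n). (\<lambda>j. 2 * fund_weight (B n) k j) \<in> root_lattice (B n)"
  proof
    fix k assume k: "k \<in> idx (B n)"
    show "(\<lambda>j. 2 * fund_weight (B n) k j) \<in> root_lattice (B n)"
    proof (rule in_Q_from_colsum[OF k, where c = "\<lambda>i. (if k = n then 1 else 2) * int (min i k)"])
      fix j assume j: "j \<in> idx (B n)"
      then have j': "j \<in> {1..n}" by (simp add: idx_def)
      show "colsum (B n) (\<lambda>i. (if k = n then 1 else 2) * int (min i k)) j = (if j = k then 2 else 0)"
        using k j' assms by (auto simp: colsum_B idx_def min_def)
    qed
  qed
  show "n \<in> idx (B n)" using assms by (simp add: idx_def)
  have "fund_weight (B n) n \<notin> root_lattice (B n)"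
    using not_in_Q[where t = "B n" and g = "\<lambda>j. if j = n then 1 else 0" and m = 2 and k = n and s = 1]
  proof -
    have "\<forall>i\<in>idx (B n). 2 dvd (\<Sum>j\<in>idx (B n). (if j = n then 1 else 0) * cartan (B n) i j)"
    proof
      fix i assume i: "i \<in> idx (B n)"
      have "(\<Sum>j\<in>idx (B n). (if j = n then 1 else 0) * cartan (B n) i j) = cartan (B n) i n"
        unfolding idx_def
        by (subst sum.cong[OF refl, of _ _ "\<lambda>j. if j = n then cartan (B n) i j else 0"])
           (use assms in auto)
      then show "2 dvd (\<Sum>j\<in>idx (B n). (if j = n then 1 else 0) * cartan (B n) i j)"
        using i assms by (auto simp: cartan_B idx_def)
    qed
    from not_in_Q[OF this, of n 1] assms show ?thesis by (simp add: idx_def)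
  qed
  then show "fund_weight (B n) n \<notin> root_lattice (B n)" .
qed

lemma typeC:
  assumes "n \<ge> 3"
  shows "root_lattice (C n) \<inter> scale 2 (weight_lattice (C n)) = scale 2 (weight_lattice (C n)) \<and>
       scale 2 (weight_lattice (C n)) \<noteq> scale 2 (root_lattice (C n))"
proof (rule pattern_b[where k = 1])
  show "\<forall>k\<in>idx (C n). (\<lambda>j. 2 * fund_weight (C n) k j) \<in> root_lattice (C n)"
  proof
    fix k assume k: "k \<in> idx (C n)"
    show "(\<lambda>j. 2 * fund_weight (C n) k j) \<in> root_lattice (C n)"
    proof (rule in_Q_from_colsum[OF k, where c = "\<lambda>i. if i < n then 2 * int (min i k) else int k"])
      fix j assume j: "j \<in> idx (C n)"
      then have j': "j \<in> {1..n}" by (simp add: idx_def)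
      show "colsum (C n) (\<lambda>i. if i < n then 2 * int (min i k) else int k) j = (if j = k then 2 else 0)"
        using k j' assms by (auto simp: colsum_C idx_def min_def)
    qed
  qed
  show "1 \<in> idx (C n)" using assms by (simp add: idx_def)
  have "\<forall>i\<in>idx (C n). 2 dvd (\<Sum>j\<in>idx (C n). (if odd j then 1 else 0) * cartan (C n) i j)"
  proof
    fix i assume i: "i \<in> idx (C n)"
    then have i': "i \<in> {1..n}" by (simp add: idx_def)
    show "2 dvd (\<Sum>j\<in>idx (C n). (if odd j then 1 else 0) * cartan (C n) i j)"
    proof (cases "odd i")
      case True
      then show ?thesis using assms i' by (simp add: rowsum_C)
    next
      case False
      then have "2 \<le> i" using i' by (cases "i = 1") auto
      then show ?thesis using assms i' False by (simp add: rowsum_C)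
    qed
  qed
  from not_in_Q[OF this, of 1 1] assms
  show "fund_weight (C n) 1 \<notin> root_lattice (C n)" by (simp add: idx_def)
qed



lemma cartan_D1: "i \<in> {1..m+4} \<Longrightarrow> j \<ge> 1 \<Longrightarrow> j \<le> m + 1 \<Longrightarrow>
   cartan (D (m+4)) i j = (if i = j then 2 else if i = j + 1 \<or> i + 1 = j then -1 else 0)"
  by (auto simp: cartan_def adjacent_def chain_edges_def)
lemma cartan_D2: "i \<in> {1..m+4} \<Longrightarrow>
   cartan (D (m+4)) i (Suc (Suc m)) = (if i = Suc (Suc m) then 2 else if i = Suc m \<or> i = m+3 \<or> i = m+4 then -1 else 0)"
  by (auto simp: cartan_def adjacent_def chain_edges_def)
lemma cartan_D3: "i \<in> {1..m+4} \<Longrightarrow>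
   cartan (D (m+4)) i (m+3) = (if i = m+3 then 2 else if i = Suc (Suc m) then -1 else 0)"
  by (auto simp: cartan_def adjacent_def chain_edges_def)
lemma cartan_D4: "i \<in> {1..m+4} \<Longrightarrow>
   cartan (D (m+4)) i (m+4) = (if i = m+4 then 2 else if i = Suc (Suc m) then -1 else 0)"
  by (auto simp: cartan_def adjacent_def chain_edges_def)

lemma cartan_D_sym: "cartan (D n) i j = cartan (D n) j i"
  by (auto simp: cartan_def adjacent_def)

lemma idx_D: "idx (D (m+4)) = {1..m+4}" by (simp add: idx_def)

lemma colsum_D1: assumes "1 \<le> j" "j \<le> m + 1"
  shows "colsum (D (m+4)) c j = 2 * c j - (if 2 \<le> j then c (j-1) else 0) - c (j+1)"
proof -
  have "colsum (D (m+4)) c j = (\<Sum>i\<in>{1..m+4}. (if i = j then 2 * c j else 0) + (if i = j+1 then - c (j+1) else 0)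
      + (if i = j - 1 then (if 2 \<le> j then - c (j-1) else 0) else 0))"
    unfolding colsum_def idx_D
    by (rule sum.cong[OF refl]) (use assms in \<open>auto simp: cartan_D1\<close>)
  also have "\<dots> = 2 * c j - (if 2 \<le> j then c (j-1) else 0) - c (j+1)"
    using assms by (auto simp: sum.distrib)
  finally show ?thesis .
qed

lemma colsum_D2: "colsum (D (m+4)) c (Suc (Suc m)) = 2 * c (Suc (Suc m)) - c (Suc m) - c (m+3) - c (m+4)"
proof -
  have "colsum (D (m+4)) c (Suc (Suc m)) = (\<Sum>i\<in>{1..m+4}. (if i = Suc (Suc m) then 2 * c (Suc (Suc m)) else 0)
      + (if i = Suc m then - c (Suc m) else 0) + (if i = m+3 then - c (m+3) else 0) + (if i = m+4 then - c (m+4) else 0))"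
    unfolding colsum_def idx_D
    by (rule sum.cong[OF refl]) (auto simp: cartan_D2)
  also have "\<dots> = 2 * c (Suc (Suc m)) - c (Suc m) - c (m+3) - c (m+4)"
    by (auto simp: sum.distrib)
  finally show ?thesis .
qed

lemma colsum_D3: "colsum (D (m+4)) c (m+3) = 2 * c (m+3) - c (Suc (Suc m))"
proof -
  have "colsum (D (m+4)) c (m+3) = (\<Sum>i\<in>{1..m+4}. (if i = m+3 then 2 * c (m+3) else 0)
      + (if i = Suc (Suc m) then - c (Suc (Suc m)) else 0))"
    unfolding colsum_def idx_D
    by (rule sum.cong[OF refl]) (auto simp: cartan_D3)
  also have "\<dots> = 2 * c (m+3) - c (Suc (Suc m))"
    by (auto simp: sum.distrib)
  finally show ?thesis .
qed

lemma colsum_D4: "colsum (D (m+4)) c (m+4) = 2 * c (m+4) - c (Suc (Suc m))"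
proof -
  have "colsum (D (m+4)) c (m+4) = (\<Sum>i\<in>{1..m+4}. (if i = m+4 then 2 * c (m+4) else 0)
      + (if i = Suc (Suc m) then - c (Suc (Suc m)) else 0))"
    unfolding colsum_def idx_D
    by (rule sum.cong[OF refl]) (auto simp: cartan_D4)
  also have "\<dots> = 2 * c (m+4) - c (Suc (Suc m))"
    by (auto simp: sum.distrib)
  finally show ?thesis .
qed

lemma idx_D_cases:
  assumes "j \<in> idx (D (m+4))"
  obtains "1 \<le> j" "j \<le> m+1" | "j = m+2" | "j = m+3" | "j = m+4"
  using assms unfolding idx_D by fastforce

lemma rowsum_D: "(\<Sum>j\<in>idx (D n). g j * cartan (D n) i j) = colsum (D n) g i"
  unfolding colsum_def by (simp add: cartan_D_sym)

lemma D_colsum_eq: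
  assumes "\<And>j. 1 \<le> j \<Longrightarrow> j \<le> m+1 \<Longrightarrow> 2 * c j - (if 2 \<le> j then c (j-1) else 0) - c (j+1) = (if j = k then s else 0)"
    "2 * c (m+2) - c (m+1) - c (m+3) - c (m+4) = (if m+2 = k then s else 0)"
    "2 * c (m+3) - c (m+2) = (if m+3 = k then s else 0)"
    "2 * c (m+4) - c (m+2) = (if m+4 = k then s else 0)"
  shows "\<And>j. j \<in> idx (D (m+4)) \<Longrightarrow> colsum (D (m+4)) c j = (if j = k then s else 0)"
proof -
  fix j assume "j \<in> idx (D (m+4))"
  then show "colsum (D (m+4)) c j = (if j = k then s else 0)"
    by (cases rule: idx_D_cases) (use assms in \<open>simp_all add: colsum_D1 colsum_D2 colsum_D3 colsum_D4\<close>)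
qed

lemma D_lam_small:
  assumes "k \<in> {1..m+2}"
  shows "(\<lambda>j. 2 * fund_weight (D (m+4)) k j) \<in> root_lattice (D (m+4))"
proof (rule in_Q_from_colsum[where c = "\<lambda>i. if i \<le> m+2 then 2 * int (min i k) else int k"])
  show "k \<in> idx (D (m+4))" using assms by (simp add: idx_D)
  show "\<And>j. j \<in> idx (D (m + 4)) \<Longrightarrow>
         colsum (D (m + 4)) (\<lambda>i. if i \<le> m + 2 then 2 * int (min i k) else int k) j = (if j = k then 2 else 0)"
    by (rule D_colsum_eq) (use assms in \<open>auto simp: min_def\<close>)
qed

lemma D_lam_spin:
  assumes "2 * h = r * (int m + 4)"
  shows "(\<lambda>j. (2 * r) * fund_weight (D (m+4)) (m+3) j) \<in> root_lattice (D (m+4))"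
    and "(\<lambda>j. (2 * r) * fund_weight (D (m+4)) (m+4) j) \<in> root_lattice (D (m+4))"
proof -
  show "(\<lambda>j. (2 * r) * fund_weight (D (m+4)) (m+3) j) \<in> root_lattice (D (m+4))"
  proof (rule in_Q_from_colsum[where c = "\<lambda>i. if i \<le> m+2 then r * int i else if i = m+3 then h else h - r"])
    show "m+3 \<in> idx (D (m+4))" by (simp add: idx_D)
    show "\<And>j. j \<in> idx (D (m + 4)) \<Longrightarrow>
         colsum (D (m + 4)) (\<lambda>i. if i \<le> m+2 then r * int i else if i = m+3 then h else h - r) j = (if j = m+3 then 2 * r else 0)"
      by (rule D_colsum_eq) (use assms in \<open>auto simp: algebra_simps\<close>)
  qed
  show "(\<lambda>j. (2 * r) * fund_weight (D (m+4)) (m+4) j) \<in> root_lattice (D (m+4))"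
  proof (rule in_Q_from_colsum[where c = "\<lambda>i. if i \<le> m+2 then r * int i else if i = m+4 then h else h - r"])
    show "m+4 \<in> idx (D (m+4))" by (simp add: idx_D)
    show "\<And>j. j \<in> idx (D (m + 4)) \<Longrightarrow>
         colsum (D (m + 4)) (\<lambda>i. if i \<le> m+2 then r * int i else if i = m+4 then h else h - r) j = (if j = m+4 then 2 * r else 0)"
      by (rule D_colsum_eq) (use assms in \<open>auto simp: algebra_simps\<close>)
  qed
qed



lemma typeD_even:
  assumes "even m"
  shows "root_lattice (D (m+4)) \<inter> scale 2 (weight_lattice (D (m+4))) = scale 2 (weight_lattice (D (m+4))) \<and>
       scale 2 (weight_lattice (D (m+4))) \<noteq> scale 2 (root_lattice (D (m+4)))"
proof (rule pattern_b[where k = "m+4"])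
  show "\<forall>k\<in>idx (D (m+4)). (\<lambda>j. 2 * fund_weight (D (m+4)) k j) \<in> root_lattice (D (m+4))"
  proof
    fix k assume k: "k \<in> idx (D (m+4))"
    have h: "2 * (int m div 2 + 2) = 1 * (int m + 4)" using assms by (auto elim!: evenE)
    from k consider "k \<in> {1..m+2}" | "k = m+3" | "k = m+4" unfolding idx_D by fastforce
    then show "(\<lambda>j. 2 * fund_weight (D (m+4)) k j) \<in> root_lattice (D (m+4))"
    proof cases
      case 1 then show ?thesis by (rule D_lam_small)
    next
      case 2 then show ?thesis using D_lam_spin(1)[OF h] by simp
    next
      case 3 then show ?thesis using D_lam_spin(2)[OF h] by simp
    qed
  qed
  show "m+4 \<in> idx (D (m+4))" by (simp add: idx_D)
  have "\<forall>i\<in>idx (D (m+4)). 2 dvd (\<Sum>j\<in>idx (D (m+4)). (if j = m+3 \<or> j = m+4 then 1 else 0) * cartan (D (m+4)) i j)"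
  proof
    fix i assume i: "i \<in> idx (D (m+4))"
    show "2 dvd (\<Sum>j\<in>idx (D (m+4)). (if j = m+3 \<or> j = m+4 then 1 else 0) * cartan (D (m+4)) i j)"
      unfolding rowsum_D using i
      by (cases rule: idx_D_cases) (auto simp: colsum_D1 colsum_D2 colsum_D3 colsum_D4)
  qed
  from not_in_Q[OF this, of "m+4" 1]
  show "fund_weight (D (m+4)) (m+4) \<notin> root_lattice (D (m+4))" by (simp add: idx_D)
qed

definition dD :: "nat \<Rightarrow> nat \<Rightarrow> int" where
  "dD m = (\<lambda>i. if i = m+3 \<or> i = m+4 then 1 else 0)"

lemma alpha_diamond_D: "alpha_diamond (D (m+4)) = rl (D (m+4)) (dD m)"
proof
  fix j
  have "rl (D (m+4)) (dD m) j = (\<Sum>i\<in>{1..m+4}. (if i = m+3 then simple_root (D (m+4)) (m+3) j else 0)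
          + (if i = m+4 then simple_root (D (m+4)) (m+4) j else 0))"
    unfolding rl_def idx_D dD_def by (rule sum.cong) auto
  also have "\<dots> = simple_root (D (m+4)) (m+3) j + simple_root (D (m+4)) (m+4) j"
    by (simp add: sum.distrib)
  finally show "alpha_diamond (D (m+4)) j = rl (D (m+4)) (dD m) j"
    by (simp add: alpha_diamond_def add.commute)
qed

lemma colsum_dD: assumes "j \<in> idx (D (m+4))"
  shows "colsum (D (m+4)) (dD m) j = (if j = m+2 then -2 else if j = m+3 \<or> j = m+4 then 2 else 0)"
  using assms by (cases rule: idx_D_cases) (auto simp: colsum_D1 colsum_D2 colsum_D3 colsum_D4 dD_def)

lemma alpha_diamond_D_val: "alpha_diamond (D (m+4)) j = (if j = m+2 then -2 else if j = m+3 \<or> j = m+4 then 2 else 0)"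
  unfolding alpha_diamond_D rl_apply using colsum_dD[of j m] by (auto simp: idx_D)

lemma D_ker:
  assumes "odd m" "\<forall>j\<in>idx (D (m+4)). even (colsum (D (m+4)) c j)"
  shows "\<forall>i\<in>idx (D (m+4)). even (c i - c (m+4) * dD m i)"
proof -
  have h': "\<forall>j. 1 \<le> j \<and> j \<le> m+1 \<longrightarrow> even (2 * c j - (if 2 \<le> j then c (j-1) else 0) - c (j+1))"
  proof (intro allI impI)
    fix j assume j: "1 \<le> j \<and> j \<le> m+1"
    then have "even (colsum (D (m+4)) c j)" using assms(2) by (auto simp: idx_D)
    then show "even (2 * c j - (if 2 \<le> j then c (j-1) else 0) - c (j+1))" using j by (simp add: colsum_D1)
  qed
  have par: "\<And>i. 1 \<le> i \<Longrightarrow> i \<le> m+2 \<Longrightarrow> even (c i - (if odd i then c 1 else 0))"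
    using chain_parity[OF h'] by simp
  have "even (colsum (D (m+4)) c (m+3))" using assms(2) by (simp add: idx_D)
  then have e2: "even (c (m+2))" by (simp add: colsum_D3)
  have "even (c (m+2) - c 1)" using par[of "m+2"] assms(1) by simp
  moreover have "c 1 = c (m+2) - (c (m+2) - c 1)" by simp
  ultimately have c1: "even (c 1)" using e2 by (metis dvd_diff)
  have small: "even (c i)" if "1 \<le> i" "i \<le> m+2" for i
  proof (cases "odd i")
    case True
    then have "even (c i - c 1)" using par[OF that] by simp
    moreover have "c i = (c i - c 1) + c 1" by simp
    ultimately show ?thesis using c1 by (metis dvd_add)
  next
    case False
    then show ?thesis using par[OF that] by simp
  qed
  have "even (colsum (D (m+4)) c (m+2))" using assms(2) by (simp add: idx_D)
  then have "even (2 * c (m+2) - c (m+1) - c (m+3) - c (m+4))" by (simp add: colsum_D2)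
  moreover have "even (c (m+1))" using small[of "m+1"] by simp
  moreover have "c (m+3) - c (m+4) = 2 * (c (m+2) - c (m+4)) - c (m+1) - (2 * c (m+2) - c (m+1) - c (m+3) - c (m+4))"
    by simp
  ultimately have e34: "even (c (m+3) - c (m+4))"
    by (metis dvd_diff dvd_triv_left)
  show ?thesis
  proof
    fix i assume "i \<in> idx (D (m+4))"
    then consider "1 \<le> i" "i \<le> m+2" | "i = m+3" | "i = m+4" unfolding idx_D by fastforce
    then show "even (c i - c (m+4) * dD m i)"
      by cases (use small e34 in \<open>auto simp: dD_def\<close>)
  qed
qed

definition gD :: "nat \<Rightarrow> nat \<Rightarrow> int" where
  "gD m = (\<lambda>i. if i \<le> m+2 then 2 * int i else if i = m+3 then 1 else -1)"

lemma D_functional4: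
  assumes "odd m"
  shows "\<forall>i\<in>idx (D (m+4)). 4 dvd (\<Sum>j\<in>idx (D (m+4)). gD m j * cartan (D (m+4)) i j)"
proof
  fix i assume i: "i \<in> idx (D (m+4))"
  obtain q where q: "m = 2 * q + 1" using assms oddE by blast
  have "4 dvd colsum (D (m+4)) (gD m) i"
    using i
  proof (cases rule: idx_D_cases)
    case 1 then show ?thesis by (cases "i = 1") (auto simp: colsum_D1 gD_def)
  next
    case 2
    have "colsum (D (m+4)) (gD m) (m+2) = 4 * (int q + 2)"
      by (simp add: colsum_D2 gD_def) (simp add: q)
    then show ?thesis using 2 by simp
  next
    case 3
    have "colsum (D (m+4)) (gD m) (m+3) = - 4 * (int q + 1)"
      by (simp add: colsum_D3 gD_def) (simp add: q)
    then show ?thesis using 3 by simp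
  next
    case 4
    have "colsum (D (m+4)) (gD m) (m+4) = - 4 * (int q + 2)"
      by (simp add: colsum_D4 gD_def) (simp add: q)
    then show ?thesis using 4 by simp
  qed
  then show "4 dvd (\<Sum>j\<in>idx (D (m+4)). gD m j * cartan (D (m+4)) i j)"
    by (simp add: rowsum_D)
qed

lemma typeD_odd:
  assumes "odd m"
  shows "root_lattice (D (m+4)) \<inter> scale 2 (weight_lattice (D (m+4))) = twoQ_plus_diamond (D (m+4)) \<and>
       twoQ_plus_diamond (D (m+4)) \<noteq> scale 2 (weight_lattice (D (m+4)))"
proof (rule pattern_d[where k = "m+4" and d = "dD m"])
  show "\<forall>c. (\<forall>j\<in>idx (D (m+4)). even (colsum (D (m+4)) c j)) \<longrightarrow>
      (\<exists>m' c'. \<forall>i\<in>idx (D (m+4)). c i = 2 * c' i + m' * dD m i)"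
  proof (intro allI impI)
    fix c assume h: "\<forall>j\<in>idx (D (m+4)). even (colsum (D (m+4)) c j)"
    have e: "\<forall>i\<in>idx (D (m+4)). even (c i - c (m+4) * dD m i)" by (rule D_ker[OF assms h])
    show "\<exists>m' c'. \<forall>i\<in>idx (D (m+4)). c i = 2 * c' i + m' * dD m i"
    proof (intro exI ballI)
      fix i assume "i \<in> idx (D (m+4))"
      then have "even (c i - c (m+4) * dD m i)" using e by blast
      then show "c i = 2 * ((c i - c (m+4) * dD m i) div 2) + c (m+4) * dD m i" by simp
    qed
  qed
  show "alpha_diamond (D (m+4)) = rl (D (m+4)) (dD m)" by (rule alpha_diamond_D)
  show "\<forall>j\<in>idx (D (m+4)). even (colsum (D (m+4)) (dD m) j)" by (simp add: colsum_dD)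
  from not_in_Q[OF D_functional4[OF assms], of "m+4" 2]
  show "(\<lambda>j. 2 * fund_weight (D (m+4)) (m+4) j) \<notin> root_lattice (D (m+4))" by (simp add: idx_D gD_def)
qed

lemma Q_add: "x \<in> root_lattice t \<Longrightarrow> y \<in> root_lattice t \<Longrightarrow> (\<lambda>j. x j + y j) \<in> root_lattice t"
  by (auto simp: root_lattice_rl rl_add[symmetric])

lemma Q_smult: "x \<in> root_lattice t \<Longrightarrow> (\<lambda>j. k * x j) \<in> root_lattice t"
  by (auto simp: root_lattice_rl rl_smult[symmetric])

lemma Q_sum:
  assumes "finite S" "\<forall>i\<in>S. f i \<in> root_lattice t"
  shows "(\<lambda>j. \<Sum>i\<in>S. f i j) \<in> root_lattice t"
proof -
  from assms(2) have "\<forall>i\<in>S. \<exists>c. f i = rl t c" by (auto simp: root_lattice_rl)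
  then obtain C where C: "\<And>i. i \<in> S \<Longrightarrow> f i = rl t (C i)" by metis
  have "(\<lambda>j. \<Sum>i\<in>S. f i j) = (\<lambda>j. \<Sum>i\<in>S. rl t (C i) j)" using C by (intro ext sum.cong) auto
  also have "\<dots> = rl t (\<lambda>x. \<Sum>i\<in>S. C i x)" by (rule rl_sum[OF assms(1), symmetric])
  finally show ?thesis by simp
qed

lemma fw_D: "fund_weight (D (m+4)) i j = (if j = i \<and> 1 \<le> j \<and> j \<le> m+4 then 1 else 0)"
  by (auto simp: fund_weight_def idx_D)

lemma sum_fw_D: "(\<Sum>i\<in>{1..m+2}. 2 * c i * fund_weight (D (m+4)) i j) = (if 1 \<le> j \<and> j \<le> m+2 then 2 * c j else 0)"
proof -
  have "(\<Sum>i\<in>{1..m+2}. 2 * c i * fund_weight (D (m+4)) i j) = (\<Sum>i\<in>{1..m+2}. if i = j then 2 * c j else 0)"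
    by (rule sum.cong) (auto simp: fw_D)
  then show ?thesis by simp
qed

lemma typeD_last:
  assumes "odd m" "n = m + 4"
  shows "twoQ_plus_diamond (D n) =
         {v. \<exists>a b m :: int. \<exists>c :: nat \<Rightarrow> int.
               v = (\<lambda>j. 4 * a * fund_weight (D n) (n - 1) j + 4 * b * fund_weight (D n) n j
                        + m * alpha_diamond (D n) j
                        + (\<Sum>i\<in>{1..n - 2}. 2 * c i * fund_weight (D n) i j))}"
proof -
  have eq: "twoQ_plus_diamond (D (m+4)) = root_lattice (D (m+4)) \<inter> scale 2 (weight_lattice (D (m+4)))"
    using typeD_odd[OF assms(1)] by simp
  have nn: "n - 1 = m + 3" "n - 2 = m + 2" using assms(2) by auto
  show ?thesis unfolding nn unfolding assms(2) eq
  proof (intro equalityI subsetI)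
    fix v assume "v \<in> root_lattice (D (m+4)) \<inter> scale 2 (weight_lattice (D (m+4)))"
    then have "v \<in> twoQ_plus_diamond (D (m+4))" using eq by simp
    then obtain u mm where u: "u \<in> scale 2 (root_lattice (D (m+4)))"
        and v: "v = (\<lambda>j. u j + mm * alpha_diamond (D (m+4)) j)"
      unfolding twoQ_plus_diamond_def by blast
    from u obtain c' where u': "u = (\<lambda>j. 2 * rl (D (m+4)) c' j)" by (auto simp: scale_def root_lattice_rl)
    define cc where "cc = (\<lambda>i. if i \<le> m+1 then colsum (D (m+4)) c' i
                               else colsum (D (m+4)) c' (m+2) - c' (m+2))"
    have "v = (\<lambda>j. 4 * c' (m+3) * fund_weight (D (m+4)) (m+3) j + 4 * c' (m+4) * fund_weight (D (m+4)) (m+4) j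
             + (mm - c' (m+2)) * alpha_diamond (D (m+4)) j
             + (\<Sum>i\<in>{1..m+2}. 2 * cc i * fund_weight (D (m+4)) i j))"
    proof
      fix j
      show "v j = 4 * c' (m+3) * fund_weight (D (m+4)) (m+3) j + 4 * c' (m+4) * fund_weight (D (m+4)) (m+4) j
             + (mm - c' (m+2)) * alpha_diamond (D (m+4)) j
             + (\<Sum>i\<in>{1..m+2}. 2 * cc i * fund_weight (D (m+4)) i j)"
      proof (cases "j \<in> idx (D (m+4))")
        case True
        then show ?thesis
        proof (cases rule: idx_D_cases)
          case 1 then show ?thesis
            by (simp only: sum_fw_D) (simp add: v u' rl_apply idx_D colsum_D1 alpha_diamond_D_val fw_D cc_def)
        next
          case 2 then show ?thesis
            by (simp only: sum_fw_D) (simp add: v u' rl_apply idx_D colsum_D2 alpha_diamond_D_val fw_D cc_def algebra_simps)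
        next
          case 3 then show ?thesis
            by (simp only: sum_fw_D) (simp add: v u' rl_apply idx_D colsum_D3 alpha_diamond_D_val fw_D cc_def algebra_simps)
        next
          case 4 then show ?thesis
            by (simp only: sum_fw_D) (simp add: v u' rl_apply idx_D colsum_D4 alpha_diamond_D_val fw_D cc_def algebra_simps)
        qed
      next
        case False
        then have "j = 0 \<or> j > m + 4" by (auto simp: idx_D)
        then show ?thesis using False
          by (auto simp: v u' rl_apply alpha_diamond_D_val sum_fw_D fw_D)
      qed
    qed
    then show "v \<in> {v. \<exists>a b mm c. v = (\<lambda>j. 4 * a * fund_weight (D (m+4)) (m+3) j + 4 * b * fund_weight (D (m+4)) (m+4) j
             + mm * alpha_diamond (D (m+4)) j + (\<Sum>i\<in>{1..m+2}. 2 * c i * fund_weight (D (m+4)) i j))}"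
      by blast
  next
    fix v assume "v \<in> {v. \<exists>a b mm c. v = (\<lambda>j. 4 * a * fund_weight (D (m+4)) (m+3) j + 4 * b * fund_weight (D (m+4)) (m+4) j
             + mm * alpha_diamond (D (m+4)) j + (\<Sum>i\<in>{1..m+2}. 2 * c i * fund_weight (D (m+4)) i j))}"
    then obtain a b mm c where v: "v = (\<lambda>j. 4 * a * fund_weight (D (m+4)) (m+3) j + 4 * b * fund_weight (D (m+4)) (m+4) j
             + mm * alpha_diamond (D (m+4)) j + (\<Sum>i\<in>{1..m+2}. 2 * c i * fund_weight (D (m+4)) i j))"
      by blast
    have h: "2 * (int m + 4) = 2 * (int m + 4)" by simp
    have A3: "(\<lambda>j. 4 * fund_weight (D (m+4)) (m+3) j) \<in> root_lattice (D (m+4))"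
      using D_lam_spin(1)[OF h] by simp
    have A4: "(\<lambda>j. 4 * fund_weight (D (m+4)) (m+4) j) \<in> root_lattice (D (m+4))"
      using D_lam_spin(2)[OF h] by simp
    have Aa: "alpha_diamond (D (m+4)) \<in> root_lattice (D (m+4))" by (simp add: alpha_diamond_D)
    have As: "\<forall>i\<in>{1..m+2}. (\<lambda>j. c i * (2 * fund_weight (D (m+4)) i j)) \<in> root_lattice (D (m+4))"
      using D_lam_small by (auto intro: Q_smult)
    have X1: "(\<lambda>j. a * (4 * fund_weight (D (m+4)) (m+3) j)) \<in> root_lattice (D (m+4))"
      by (rule Q_smult[OF A3])
    have X2: "(\<lambda>j. b * (4 * fund_weight (D (m+4)) (m+4) j)) \<in> root_lattice (D (m+4))"
      by (rule Q_smult[OF A4])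
    have X3: "(\<lambda>j. mm * alpha_diamond (D (m+4)) j) \<in> root_lattice (D (m+4))"
      by (rule Q_smult[OF Aa])
    have X4: "(\<lambda>j. \<Sum>i\<in>{1..m+2}. c i * (2 * fund_weight (D (m+4)) i j)) \<in> root_lattice (D (m+4))"
      using Q_sum[of "{1..m+2}" "\<lambda>i j. c i * (2 * fund_weight (D (m+4)) i j)"] As by simp
    have "v = (\<lambda>j. a * (4 * fund_weight (D (m+4)) (m+3) j) + b * (4 * fund_weight (D (m+4)) (m+4) j)
           + mm * alpha_diamond (D (m+4)) j + (\<Sum>i\<in>{1..m+2}. c i * (2 * fund_weight (D (m+4)) i j)))"
      unfolding v by (intro ext) (simp add: algebra_simps)
    then have vQ: "v \<in> root_lattice (D (m+4))"
      using Q_add[OF Q_add[OF Q_add[OF X1 X2] X3] X4] by simp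
    have vev: "\<forall>j. even (v j)"
      unfolding v by (simp only: sum_fw_D) (auto simp: alpha_diamond_D_val fw_D)
    have vL: "v \<in> weight_lattice (D (m+4))"
      unfolding v by (simp only: sum_fw_D) (auto simp: weight_lattice_def idx_D alpha_diamond_D_val fw_D)
    show "v \<in> root_lattice (D (m+4)) \<inter> scale 2 (weight_lattice (D (m+4)))"
      using vQ vev vL by (simp add: mem_scale2_L)
  qed
qed



lemma idx6: "idx E6 = {1,2,3,4,5,6}" by (auto simp: idx_def)
lemma idx7: "idx E7 = {1,2,3,4,5,6,7}" by (auto simp: idx_def)
lemma idx8: "idx E8 = {1,2,3,4,5,6,7,8}" by (auto simp: idx_def)
lemma idxF: "idx F4 = {1,2,3,4}" by (auto simp: idx_def)
lemma idxG: "idx G2 = {1,2}" by (auto simp: idx_def)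

lemmas cartan_simps = cartan_def adjacent_def E_edges_def chain_edges_def

lemma inQ_E8: "\<forall>k\<in>idx E8. (\<lambda>j. 1 * fund_weight E8 k j) \<in> root_lattice E8"
proof
  fix k assume k: "k \<in> idx E8"
  then consider "k = 1" | "k = 2" | "k = 3" | "k = 4" | "k = 5" | "k = 6" | "k = 7" | "k = 8" by (auto simp: idx8)
  then show "(\<lambda>j. 1 * fund_weight E8 k j) \<in> root_lattice E8"
  proof cases
    case 1
    show ?thesis unfolding \<open>k = 1\<close>
      by (rule in_Q_from_colsum[where c = "(\<lambda>i::nat. if i = 1 then 4 else (if i = 2 then 5 else (if i = 3 then 7 else (if i = 4 then 10 else (if i = 5 then 8 else (if i = 6 then 6 else (if i = 7 then 4 else (if i = 8 then 2 else (0)))))))))"])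
         (auto simp: idx8 colsum_def cartan_simps)
  next
    case 2
    show ?thesis unfolding \<open>k = 2\<close>
      by (rule in_Q_from_colsum[where c = "(\<lambda>i::nat. if i = 1 then 5 else (if i = 2 then 8 else (if i = 3 then 10 else (if i = 4 then 15 else (if i = 5 then 12 else (if i = 6 then 9 else (if i = 7 then 6 else (if i = 8 then 3 else (0)))))))))"])
         (auto simp: idx8 colsum_def cartan_simps)
  next
    case 3
    show ?thesis unfolding \<open>k = 3\<close>
      by (rule in_Q_from_colsum[where c = "(\<lambda>i::nat. if i = 1 then 7 else (if i = 2 then 10 else (if i = 3 then 14 else (if i = 4 then 20 else (if i = 5 then 16 else (if i = 6 then 12 else (if i = 7 then 8 else (if i = 8 then 4 else (0)))))))))"])
         (auto simp: idx8 colsum_def cartan_simps)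
  next
    case 4
    show ?thesis unfolding \<open>k = 4\<close>
      by (rule in_Q_from_colsum[where c = "(\<lambda>i::nat. if i = 1 then 10 else (if i = 2 then 15 else (if i = 3 then 20 else (if i = 4 then 30 else (if i = 5 then 24 else (if i = 6 then 18 else (if i = 7 then 12 else (if i = 8 then 6 else (0)))))))))"])
         (auto simp: idx8 colsum_def cartan_simps)
  next
    case 5
    show ?thesis unfolding \<open>k = 5\<close>
      by (rule in_Q_from_colsum[where c = "(\<lambda>i::nat. if i = 1 then 8 else (if i = 2 then 12 else (if i = 3 then 16 else (if i = 4 then 24 else (if i = 5 then 20 else (if i = 6 then 15 else (if i = 7 then 10 else (if i = 8 then 5 else (0)))))))))"])
         (auto simp: idx8 colsum_def cartan_simps)
  next
    case 6
    show ?thesis unfolding \<open>k = 6\<close>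
      by (rule in_Q_from_colsum[where c = "(\<lambda>i::nat. if i = 1 then 6 else (if i = 2 then 9 else (if i = 3 then 12 else (if i = 4 then 18 else (if i = 5 then 15 else (if i = 6 then 12 else (if i = 7 then 8 else (if i = 8 then 4 else (0)))))))))"])
         (auto simp: idx8 colsum_def cartan_simps)
  next
    case 7
    show ?thesis unfolding \<open>k = 7\<close>
      by (rule in_Q_from_colsum[where c = "(\<lambda>i::nat. if i = 1 then 4 else (if i = 2 then 6 else (if i = 3 then 8 else (if i = 4 then 12 else (if i = 5 then 10 else (if i = 6 then 8 else (if i = 7 then 6 else (if i = 8 then 3 else (0)))))))))"])
         (auto simp: idx8 colsum_def cartan_simps)
  next
    case 8
    show ?thesis unfolding \<open>k = 8\<close>
      by (rule in_Q_from_colsum[where c = "(\<lambda>i::nat. if i = 1 then 2 else (if i = 2 then 3 else (if i = 3 then 4 else (if i = 4 then 6 else (if i = 5 then 5 else (if i = 6 then 4 else (if i = 7 then 3 else (if i = 8 then 2 else (0)))))))))"])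
         (auto simp: idx8 colsum_def cartan_simps)
  qed
qed

lemma inQ_F4: "\<forall>k\<in>idx F4. (\<lambda>j. 1 * fund_weight F4 k j) \<in> root_lattice F4"
proof
  fix k assume k: "k \<in> idx F4"
  then consider "k = 1" | "k = 2" | "k = 3" | "k = 4" by (auto simp: idxF)
  then show "(\<lambda>j. 1 * fund_weight F4 k j) \<in> root_lattice F4"
  proof cases
    case 1
    show ?thesis unfolding \<open>k = 1\<close>
      by (rule in_Q_from_colsum[where c = "(\<lambda>i::nat. if i = 1 then 2 else (if i = 2 then 3 else (if i = 3 then 4 else (if i = 4 then 2 else (0)))))"])
         (auto simp: idxF colsum_def cartan_simps)
  next
    case 2
    show ?thesis unfolding \<open>k = 2\<close>
      by (rule in_Q_from_colsum[where c = "(\<lambda>i::nat. if i = 1 then 3 else (if i = 2 then 6 else (if i = 3 then 8 else (if i = 4 then 4 else (0)))))"])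
         (auto simp: idxF colsum_def cartan_simps)
  next
    case 3
    show ?thesis unfolding \<open>k = 3\<close>
      by (rule in_Q_from_colsum[where c = "(\<lambda>i::nat. if i = 1 then 2 else (if i = 2 then 4 else (if i = 3 then 6 else (if i = 4 then 3 else (0)))))"])
         (auto simp: idxF colsum_def cartan_simps)
  next
    case 4
    show ?thesis unfolding \<open>k = 4\<close>
      by (rule in_Q_from_colsum[where c = "(\<lambda>i::nat. if i = 1 then 1 else (if i = 2 then 2 else (if i = 3 then 3 else (if i = 4 then 2 else (0)))))"])
         (auto simp: idxF colsum_def cartan_simps)
  qed
qed

lemma inQ_G2: "\<forall>k\<in>idx G2. (\<lambda>j. 1 * fund_weight G2 k j) \<in> root_lattice G2"
proof
  fix k assume k: "k \<in> idx G2"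
  then consider "k = 1" | "k = 2" by (auto simp: idxG)
  then show "(\<lambda>j. 1 * fund_weight G2 k j) \<in> root_lattice G2"
  proof cases
    case 1
    show ?thesis unfolding \<open>k = 1\<close>
      by (rule in_Q_from_colsum[where c = "(\<lambda>i::nat. if i = 1 then 2 else (if i = 2 then 1 else (0)))"])
         (auto simp: idxG colsum_def cartan_simps)
  next
    case 2
    show ?thesis unfolding \<open>k = 2\<close>
      by (rule in_Q_from_colsum[where c = "(\<lambda>i::nat. if i = 1 then 3 else (if i = 2 then 2 else (0)))"])
         (auto simp: idxG colsum_def cartan_simps)
  qed
qed

lemma inQ_E7: "\<forall>k\<in>idx E7. (\<lambda>j. 2 * fund_weight E7 k j) \<in> root_lattice E7"
proof
  fix k assume k: "k \<in> idx E7"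
  then consider "k = 1" | "k = 2" | "k = 3" | "k = 4" | "k = 5" | "k = 6" | "k = 7" by (auto simp: idx7)
  then show "(\<lambda>j. 2 * fund_weight E7 k j) \<in> root_lattice E7"
  proof cases
    case 1
    show ?thesis unfolding \<open>k = 1\<close>
      by (rule in_Q_from_colsum[where c = "(\<lambda>i::nat. if i = 1 then 4 else (if i = 2 then 4 else (if i = 3 then 6 else (if i = 4 then 8 else (if i = 5 then 6 else (if i = 6 then 4 else (if i = 7 then 2 else (0))))))))"])
         (auto simp: idx7 colsum_def cartan_simps)
  next
    case 2
    show ?thesis unfolding \<open>k = 2\<close>
      by (rule in_Q_from_colsum[where c = "(\<lambda>i::nat. if i = 1 then 4 else (if i = 2 then 7 else (if i = 3 then 8 else (if i = 4 then 12 else (if i = 5 then 9 else (if i = 6 then 6 else (if i = 7 then 3 else (0))))))))"])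
         (auto simp: idx7 colsum_def cartan_simps)
  next
    case 3
    show ?thesis unfolding \<open>k = 3\<close>
      by (rule in_Q_from_colsum[where c = "(\<lambda>i::nat. if i = 1 then 6 else (if i = 2 then 8 else (if i = 3 then 12 else (if i = 4 then 16 else (if i = 5 then 12 else (if i = 6 then 8 else (if i = 7 then 4 else (0))))))))"])
         (auto simp: idx7 colsum_def cartan_simps)
  next
    case 4
    show ?thesis unfolding \<open>k = 4\<close>
      by (rule in_Q_from_colsum[where c = "(\<lambda>i::nat. if i = 1 then 8 else (if i = 2 then 12 else (if i = 3 then 16 else (if i = 4 then 24 else (if i = 5 then 18 else (if i = 6 then 12 else (if i = 7 then 6 else (0))))))))"])
         (auto simp: idx7 colsum_def cartan_simps)
  next
    case 5
    show ?thesis unfolding \<open>k = 5\<close>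
      by (rule in_Q_from_colsum[where c = "(\<lambda>i::nat. if i = 1 then 6 else (if i = 2 then 9 else (if i = 3 then 12 else (if i = 4 then 18 else (if i = 5 then 15 else (if i = 6 then 10 else (if i = 7 then 5 else (0))))))))"])
         (auto simp: idx7 colsum_def cartan_simps)
  next
    case 6
    show ?thesis unfolding \<open>k = 6\<close>
      by (rule in_Q_from_colsum[where c = "(\<lambda>i::nat. if i = 1 then 4 else (if i = 2 then 6 else (if i = 3 then 8 else (if i = 4 then 12 else (if i = 5 then 10 else (if i = 6 then 8 else (if i = 7 then 4 else (0))))))))"])
         (auto simp: idx7 colsum_def cartan_simps)
  next
    case 7
    show ?thesis unfolding \<open>k = 7\<close>
      by (rule in_Q_from_colsum[where c = "(\<lambda>i::nat. if i = 1 then 2 else (if i = 2 then 3 else (if i = 3 then 4 else (if i = 4 then 6 else (if i = 5 then 5 else (if i = 6 then 4 else (if i = 7 then 3 else (0))))))))"])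
         (auto simp: idx7 colsum_def cartan_simps)
  qed
qed

lemma notQ_E7: "fund_weight E7 2 \<notin> root_lattice E7"
proof -
  have "\<forall>i\<in>idx E7. 2 dvd (\<Sum>j\<in>idx E7. (\<lambda>j::nat. if j = 1 then 4 else (if j = 2 then 7 else (if j = 3 then 8 else (if j = 4 then 12 else (if j = 5 then 9 else (if j = 6 then 6 else (if j = 7 then 3 else (0)))))))) j * cartan E7 i j)"
    by (auto simp: idx7 cartan_simps)
  from not_in_Q[OF this, of 2 1] show ?thesis by (simp add: idx7)
qed

lemma notQ_E6: "fund_weight E6 1 \<notin> root_lattice E6"
proof -
  have "\<forall>i\<in>idx E6. 3 dvd (\<Sum>j\<in>idx E6. (\<lambda>j::nat. if j = 1 then 4 else (if j = 2 then 3 else (if j = 3 then 5 else (if j = 4 then 6 else (if j = 5 then 4 else (if j = 6 then 2 else (0))))))) j * cartan E6 i j)"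
    by (auto simp: idx6 cartan_simps)
  from not_in_Q[OF this, of 1 1] show ?thesis by (simp add: idx6)
qed

lemma ker_E6: "\<forall>c. (\<forall>j\<in>idx E6. even (colsum E6 c j)) \<longrightarrow> (\<forall>i\<in>idx E6. even (c i))"
proof (intro allI impI)
  fix c :: "nat \<Rightarrow> int" assume h: "\<forall>j\<in>idx E6. even (colsum E6 c j)"
  define v where "v = colsum E6 c"
  have ev: "even (v 1)" "even (v 2)" "even (v 3)" "even (v 4)" "even (v 5)" "even (v 6)"
    using h by (auto simp: idx6 v_def)
  have vs: "v 1 = 2 * c 1 - c 3" "v 2 = 2 * c 2 - c 4" "v 3 = 2 * c 3 - c 1 - c 4"
    "v 4 = 2 * c 4 - c 2 - c 3 - c 5" "v 5 = 2 * c 5 - c 4 - c 6" "v 6 = 2 * c 6 - c 5"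
    by (simp_all add: v_def colsum_def idx6 cartan_simps)
  have "3 * c 1 = (4) * v 1 + (3) * v 2 + (5) * v 3 + (6) * v 4 + (4) * v 5 + (2) * v 6" unfolding vs by (simp add: algebra_simps)
  then have "even (3 * c 1)" using ev by simp
  then have e1: "even (c 1)" by simp
  have "3 * c 2 = (3) * v 1 + (6) * v 2 + (6) * v 3 + (9) * v 4 + (6) * v 5 + (3) * v 6" unfolding vs by (simp add: algebra_simps)
  then have "even (3 * c 2)" using ev by simp
  then have e2: "even (c 2)" by simp
  have "3 * c 3 = (5) * v 1 + (6) * v 2 + (10) * v 3 + (12) * v 4 + (8) * v 5 + (4) * v 6" unfolding vs by (simp add: algebra_simps)
  then have "even (3 * c 3)" using ev by simp
  then have e3: "even (c 3)" by simp
  have "3 * c 4 = (6) * v 1 + (9) * v 2 + (12) * v 3 + (18) * v 4 + (12) * v 5 + (6) * v 6" unfolding vs by (simp add: algebra_simps)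
  then have "even (3 * c 4)" using ev by simp
  then have e4: "even (c 4)" by simp
  have "3 * c 5 = (4) * v 1 + (6) * v 2 + (8) * v 3 + (12) * v 4 + (10) * v 5 + (5) * v 6" unfolding vs by (simp add: algebra_simps)
  then have "even (3 * c 5)" using ev by simp
  then have e5: "even (c 5)" by simp
  have "3 * c 6 = (2) * v 1 + (3) * v 2 + (4) * v 3 + (6) * v 4 + (5) * v 5 + (4) * v 6" unfolding vs by (simp add: algebra_simps)
  then have "even (3 * c 6)" using ev by simp
  then have e6: "even (c 6)" by simp
  show "\<forall>i\<in>idx E6. even (c i)" using e1 e2 e3 e4 e5 e6 by (auto simp: idx6)
qed



theorem proposition2p2:
  assumes "valid_type t"
  shows
   "(((\<exists>k\<ge>1. t = A (2 * k)) \<or> t = E6) \<longrightarrow>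
       root_lattice t \<inter> scale 2 (weight_lattice t) = scale 2 (root_lattice t) \<and>
       scale 2 (root_lattice t) \<noteq> scale 2 (weight_lattice t))
  \<and> ((t = A 1 \<or> (\<exists>n. t = B n) \<or> (\<exists>n. t = C n) \<or> (\<exists>k. t = D (2 * k + 2)) \<or> t = E7) \<longrightarrow>
       root_lattice t \<inter> scale 2 (weight_lattice t) = scale 2 (weight_lattice t) \<and>
       scale 2 (weight_lattice t) \<noteq> scale 2 (root_lattice t))
  \<and> ((t = E8 \<or> t = F4 \<or> t = G2) \<longrightarrow>
       root_lattice t \<inter> scale 2 (weight_lattice t) = scale 2 (weight_lattice t) \<and>
       scale 2 (weight_lattice t) = scale 2 (root_lattice t))
  \<and> ((\<exists>k\<ge>1. t = A (2 * k + 1) \<or> t = D (2 * k + 3)) \<longrightarrow>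
       root_lattice t \<inter> scale 2 (weight_lattice t) = twoQ_plus_diamond t \<and>
       twoQ_plus_diamond t \<noteq> scale 2 (weight_lattice t))
  \<and> (\<forall>n. t = D n \<and> odd n \<longrightarrow>
       twoQ_plus_diamond t =
         {v. \<exists>a b m :: int. \<exists>c :: nat \<Rightarrow> int.
               v = (\<lambda>j. 4 * a * fund_weight t (n - 1) j + 4 * b * fund_weight t n j
                        + m * alpha_diamond t j
                        + (\<Sum>i\<in>{1..n - 2}. 2 * c i * fund_weight t i j))})"
proof -
  have P1: "(((\<exists>k\<ge>1. t = A (2 * k)) \<or> t = E6) \<longrightarrow>
       root_lattice t \<inter> scale 2 (weight_lattice t) = scale 2 (root_lattice t) \<and>
       scale 2 (root_lattice t) \<noteq> scale 2 (weight_lattice t))"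
  proof
  assume "(\<exists>k\<ge>1. t = A (2 * k)) \<or> t = E6"
  then show "root_lattice t \<inter> scale 2 (weight_lattice t) = scale 2 (root_lattice t) \<and>
       scale 2 (root_lattice t) \<noteq> scale 2 (weight_lattice t)"
  proof
    assume "\<exists>k\<ge>1. t = A (2 * k)"
    then obtain k where "k \<ge> 1" "t = A (2 * k)" by blast
    then show ?thesis by (rule typeA_even)
  next
    assume t: "t = E6"
    have "1 \<in> idx E6" by (simp add: idx6)
    from pattern_a[OF ker_E6 this notQ_E6] show ?thesis using t by simp
  qed
  qed
  have P2: "((t = A 1 \<or> (\<exists>n. t = B n) \<or> (\<exists>n. t = C n) \<or> (\<exists>k. t = D (2 * k + 2)) \<or> t = E7) \<longrightarrow>
       root_lattice t \<inter> scale 2 (weight_lattice t) = scale 2 (weight_lattice t) \<and>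
       scale 2 (weight_lattice t) \<noteq> scale 2 (root_lattice t))"
  proof
  assume "t = A 1 \<or> (\<exists>n. t = B n) \<or> (\<exists>n. t = C n) \<or> (\<exists>k. t = D (2 * k + 2)) \<or> t = E7"
  then show "root_lattice t \<inter> scale 2 (weight_lattice t) = scale 2 (weight_lattice t) \<and>
       scale 2 (weight_lattice t) \<noteq> scale 2 (root_lattice t)"
  proof (elim disjE exE)
    assume "t = A 1" then show ?thesis using typeA1 by simp
  next
    fix n assume t: "t = B n"
    then show ?thesis using typeB[of n] assms by simp
  next
    fix n assume t: "t = C n"
    then show ?thesis using typeC[of n] assms by simp
  next
    fix k assume t: "t = D (2 * k + 2)"
    then have "k \<ge> 1" using assms by simp
    then have "2 * k + 2 = (2 * k - 2) + 4" "even (2 * k - 2)" by auto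
    then show ?thesis using typeD_even[of "2 * k - 2"] t by simp
  next
    assume t: "t = E7"
    have "2 \<in> idx E7" by (simp add: idx7)
    from pattern_b[OF inQ_E7 this notQ_E7] show ?thesis using t by simp
  qed
  qed
  have P3: "((t = E8 \<or> t = F4 \<or> t = G2) \<longrightarrow>
       root_lattice t \<inter> scale 2 (weight_lattice t) = scale 2 (weight_lattice t) \<and>
       scale 2 (weight_lattice t) = scale 2 (root_lattice t))"
  proof
  assume "t = E8 \<or> t = F4 \<or> t = G2"
  then show "root_lattice t \<inter> scale 2 (weight_lattice t) = scale 2 (weight_lattice t) \<and>
       scale 2 (weight_lattice t) = scale 2 (root_lattice t)"
    using pattern_c[OF inQ_E8] pattern_c[OF inQ_F4] pattern_c[OF inQ_G2] by blast
  qed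
  have P4: "((\<exists>k\<ge>1. t = A (2 * k + 1) \<or> t = D (2 * k + 3)) \<longrightarrow>
       root_lattice t \<inter> scale 2 (weight_lattice t) = twoQ_plus_diamond t \<and>
       twoQ_plus_diamond t \<noteq> scale 2 (weight_lattice t))"
  proof
  assume "\<exists>k\<ge>1. t = A (2 * k + 1) \<or> t = D (2 * k + 3)"
  then obtain k where k: "k \<ge> 1" and "t = A (2 * k + 1) \<or> t = D (2 * k + 3)" by blast
  then show "root_lattice t \<inter> scale 2 (weight_lattice t) = twoQ_plus_diamond t \<and>
       twoQ_plus_diamond t \<noteq> scale 2 (weight_lattice t)"
  proof (elim disjE)
    assume "t = A (2 * k + 1)" then show ?thesis using typeA_odd[OF k] by simp
  next
    assume t: "t = D (2 * k + 3)"
    have eq: "2 * k + 3 = (2 * k - 1) + 4" and od: "odd (2 * k - 1)" using k by auto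
    have "t = D ((2 * k - 1) + 4)" using t eq by metis
    then show ?thesis using typeD_odd[OF od] by simp
  qed
  qed
  have P5: "(\<forall>n. t = D n \<and> odd n \<longrightarrow>
       twoQ_plus_diamond t =
         {v. \<exists>a b m :: int. \<exists>c :: nat \<Rightarrow> int.
               v = (\<lambda>j. 4 * a * fund_weight t (n - 1) j + 4 * b * fund_weight t n j
                        + m * alpha_diamond t j
                        + (\<Sum>i\<in>{1..n - 2}. 2 * c i * fund_weight t i j))})"
  proof (intro allI impI)
  fix n assume h: "t = D n \<and> odd n"
  then have n: "n \<ge> 4" "odd n" using assms by auto
  then have "n \<ge> 5" by presburger
  then have "n = (n - 4) + 4" "odd (n - 4)" using n by auto
  then show "twoQ_plus_diamond t =
         {v. \<exists>a b m :: int. \<exists>c :: nat \<Rightarrow> int.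
               v = (\<lambda>j. 4 * a * fund_weight t (n - 1) j + 4 * b * fund_weight t n j
                        + m * alpha_diamond t j
                        + (\<Sum>i\<in>{1..n - 2}. 2 * c i * fund_weight t i j))}"
    using typeD_last[of "n - 4" n] h by simp
  qed
  show ?thesis using P1 P2 P3 P4 P5 by blast
qed


end
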